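(* Let $S$ be a semigroup, $I$ an interior ideal of $S$, and $a\in S$ with $a\notin I$. Then there exists an irreducible interior ideal $B$ of $S$ such that $I\subseteq B$ and $a\notin B$.
   Context: A subsemigroup $I$ of $S$ (non-empty with $II\subseteq I$) is an interior ideal if $SIS\subseteq I$. An interior ideal $I$ is irreducible if for all interior ideals $I_1,I_2$ of $S$, $I_1\cap I_2=I$ implies $I_1=I$ or $I_2=I$. *)

theory Defs
  imports Main
begin

text \<open>The semigroup S is the whole carrier of a type of class semigroup_mult.\<close>

definition subsemigroup :: "'a::semigroup_mult set \<Rightarrow> bool" where
  "subsemigroup I \<longleftrightarrow> I \<noteq> {} \<and> (\<forall>x\<in>I. \<forall>y\<in>I. x * y \<in> I)"

definition interior_ideal :: "'a::semigroup_mult set \<Rightarrow> bool" where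
  "interior_ideal I \<longleftrightarrow> subsemigroup I \<and> (\<forall>s t x. x \<in> I \<longrightarrow> s * x * t \<in> I)"

definition irreducible_interior_ideal :: "'a::semigroup_mult set \<Rightarrow> bool" where
  "irreducible_interior_ideal I \<longleftrightarrow> interior_ideal I \<and>
     (\<forall>I1 I2. interior_ideal I1 \<longrightarrow> interior_ideal I2 \<longrightarrow> I1 \<inter> I2 = I \<longrightarrow> I1 = I \<or> I2 = I)"

end

theory Submission
  imports Defs
begin

theorem mainTheorem11:
  fixes I :: "'a::semigroup_mult set" and a :: 'a
  assumes "interior_ideal I" and "a \<notin> I"
  shows "\<exists>B. irreducible_interior_ideal B \<and> I \<subseteq> B \<and> a \<notin> B"
proof -
  define F where "F = {J. interior_ideal J \<and> I \<subseteq> J \<and> a \<notin> J}"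
  have ne: "F \<noteq> {}" using assms unfolding F_def by blast
  have ch: "\<Union>C \<in> F" if C: "C \<noteq> {}" "subset.chain F C" for C
  proof -
    have sub: "C \<subseteq> F" and lin: "\<forall>X\<in>C. \<forall>Y\<in>C. X \<subseteq> Y \<or> Y \<subseteq> X"
      using C(2) unfolding subset.chain_def by auto
    obtain J0 where J0: "J0 \<in> C" using C(1) by blast
    have "I \<subseteq> \<Union>C" using J0 sub unfolding F_def by blast
    moreover have "a \<notin> \<Union>C" using sub unfolding F_def by blast
    moreover have "\<Union>C \<noteq> {}"
      using J0 sub unfolding F_def interior_ideal_def subsemigroup_def by blast
    moreover have "x * y \<in> \<Union>C" if xy: "x \<in> \<Union>C" "y \<in> \<Union>C" for x y
    proof -
      obtain X Y where XY: "X \<in> C" "Y \<in> C" "x \<in> X" "y \<in> Y" using xy by blast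
      show ?thesis
      proof (cases "X \<subseteq> Y")
        case True
        then have "x * y \<in> Y" using XY sub unfolding F_def interior_ideal_def subsemigroup_def by blast
        then show ?thesis using XY by blast
      next
        case False
        then have "Y \<subseteq> X" using lin XY by blast
        then have "x * y \<in> X" using XY sub unfolding F_def interior_ideal_def subsemigroup_def by blast
        then show ?thesis using XY by blast
      qed
    qed
    moreover have "s * x * t \<in> \<Union>C" if "x \<in> \<Union>C" for s t x
      using that sub unfolding F_def interior_ideal_def by blast
    ultimately show ?thesis unfolding F_def interior_ideal_def subsemigroup_def by blast
  qed
  obtain M where M: "M \<in> F" and max: "\<forall>X\<in>F. M \<subseteq> X \<longrightarrow> X = M"
    using subset_Zorn_nonempty[OF ne ch] by blast
  have "irreducible_interior_ideal M"
    unfolding irreducible_interior_ideal_def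
  proof (intro conjI allI impI)
    show "interior_ideal M" using M unfolding F_def by blast
    fix I1 I2 assume h: "interior_ideal I1" "interior_ideal I2" "I1 \<inter> I2 = M"
    show "I1 = M \<or> I2 = M"
    proof (rule ccontr)
      assume "\<not> (I1 = M \<or> I2 = M)"
      then have "I1 \<notin> F" "I2 \<notin> F" using max h(3) by blast+
      then have "a \<in> I1" "a \<in> I2" using h M unfolding F_def by blast+
      then show False using h(3) M unfolding F_def by blast
    qed
  qed
  then show ?thesis using M unfolding F_def by blast
qed

end
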